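(* Let $m,n,k$ be positive integers, $A\in\mathbb{R}^{m\times n}$ satisfying the $(2k+1)$-RIP with $\|A_i\|_2=1$ for every column $A_i$, $x^*\in\mathbb{R}^n$ with support $S^*$, $|S^*|\le k$, $e\in\mathbb{R}^m$, $y=Ax^*+e$. For every initialization $\mathcal{X}^0$, every $\eta>0$ and every $t\in\mathbb{N}$, the SEA iterates satisfy $$\left\|\frac{u^t}{\eta}-A^T(Ax^t-y)\right\|_\infty=\frac1\eta\|b^t\|_\infty\le\alpha_k^{RIP}\|x^*\|_2+\gamma_k^{RIP}\|e\|_2,$$ where $b^t=u^t-\eta A^T(Ax^t-y)$.
   Context: For $l\in\{1,\dots,n\}$, the restricted isometry constant $\delta_l$ of $A$ is the smallest $\delta\ge0$ such that $(1-\delta)\|x\|_2^2\le\|Ax\|_2^2\le(1+\delta)\|x\|_2^2$ for all $x$ with at most $l$ nonzero entries; $A$ satisfies the $l$-RIP if $\delta_l<1$. $\alpha_k^{RIP}=\delta_{2k+1}\left(1+\frac{\delta_{2k}}{1-\delta_k}\right)$ and $\gamma_k^{RIP}=1+\frac{\delta_{2k+1}\sqrt{1+\delta_k}}{1-\delta_k}$. $S^*=\{i:x^*_i\neq0\}$. For $v\in\mathbb{R}^n$, $\mathrm{largest}_k(v)$ is the set of indices of the $k$ entries of $v$ with largest absolute value (ties broken by selecting the highest indices). For $S\subseteq\{1,\dots,n\}$, $A_S$ is the submatrix of columns indexed by $S$, $v_S$ the restriction of a vector to $S$, $A_S^\dagger$ the Moore–Penrose pseudoinverse of $A_S$. SEA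 with initialization $\mathcal{X}^0$ and step size $\eta$ generates, for $t=0,1,2,\dots$: $S^t=\mathrm{largest}_k(\mathcal{X}^t)$; $x^t_i=0$ for $i\notin S^t$ and $x^t_{S^t}=A_{S^t}^\dagger y$; $\mathcal{X}^{t+1}=\mathcal{X}^t-\eta A^T(Ax^t-y)$. The oracle direction is $u^t_i=-\eta x^*_i$ if $i\in S^*\setminus S^t$ and $u^t_i=0$ otherwise. *)

theory Defs
  imports Complex_Main
begin

text \<open>Conventions: indices are 0-based. A vector in R^n is a function nat => real,
  only its values on {..<n} matter; an m x n matrix is a function nat => nat => real,
  only its values on {..<m} x {..<n} matter.\<close>

definition mat_vec :: "nat \<Rightarrow> (nat \<Rightarrow> nat \<Rightarrow> real) \<Rightarrow> (nat \<Rightarrow> real) \<Rightarrow> nat \<Rightarrow> real" where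
  "mat_vec n A x = (\<lambda>i. \<Sum>j<n. A i j * x j)"

definition tmat_vec :: "nat \<Rightarrow> (nat \<Rightarrow> nat \<Rightarrow> real) \<Rightarrow> (nat \<Rightarrow> real) \<Rightarrow> nat \<Rightarrow> real" where
  "tmat_vec m A r = (\<lambda>j. \<Sum>i<m. A i j * r i)"

definition norm2 :: "nat \<Rightarrow> (nat \<Rightarrow> real) \<Rightarrow> real" where
  "norm2 n x = sqrt (\<Sum>i<n. (x i)\<^sup>2)"

definition norm_inf :: "nat \<Rightarrow> (nat \<Rightarrow> real) \<Rightarrow> real" where
  "norm_inf n x = Max ((\<lambda>i. \<bar>x i\<bar>) ` {..<n})"

definition sparse :: "nat \<Rightarrow> nat \<Rightarrow> (nat \<Rightarrow> real) \<Rightarrow> bool" where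
  "sparse n l x \<longleftrightarrow> card {i. i < n \<and> x i \<noteq> 0} \<le> l"

definition rip_const :: "nat \<Rightarrow> nat \<Rightarrow> (nat \<Rightarrow> nat \<Rightarrow> real) \<Rightarrow> nat \<Rightarrow> real" where
  "rip_const m n A l = Inf {\<delta>. \<delta> \<ge> 0 \<and> (\<forall>x. sparse n l x \<longrightarrow>
      (1 - \<delta>) * (norm2 n x)\<^sup>2 \<le> (norm2 m (mat_vec n A x))\<^sup>2 \<and>
      (norm2 m (mat_vec n A x))\<^sup>2 \<le> (1 + \<delta>) * (norm2 n x)\<^sup>2)}"

definition alpha_rip :: "nat \<Rightarrow> nat \<Rightarrow> (nat \<Rightarrow> nat \<Rightarrow> real) \<Rightarrow> nat \<Rightarrow> real" where
  "alpha_rip m n A k = rip_const m n A (2*k+1) *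
     (1 + rip_const m n A (2*k) / (1 - rip_const m n A k))"

definition gamma_rip :: "nat \<Rightarrow> nat \<Rightarrow> (nat \<Rightarrow> nat \<Rightarrow> real) \<Rightarrow> nat \<Rightarrow> real" where
  "gamma_rip m n A k = 1 + rip_const m n A (2*k+1) * sqrt (1 + rip_const m n A k)
     / (1 - rip_const m n A k)"

text \<open>largest_k(v): indices of the k entries of largest absolute value, ties broken by
  selecting the highest indices: i is selected iff fewer than k indices j precede it in
  the lexicographic order on (|v j|, j).\<close>
definition largest :: "nat \<Rightarrow> nat \<Rightarrow> (nat \<Rightarrow> real) \<Rightarrow> nat set" where
  "largest n k v = {i. i < n \<and>
     card {j. j < n \<and> (\<bar>v j\<bar> > \<bar>v i\<bar> \<or> (\<bar>v j\<bar> = \<bar>v i\<bar> \<and> j > i))} < k}"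

text \<open>Moore--Penrose pseudoinverse of the submatrix A_S (rows {..<m}, columns S), given by
  the four Penrose conditions; the result is indexed by S x {..<m} (zero elsewhere).\<close>
definition penrose :: "nat \<Rightarrow> nat set \<Rightarrow> (nat \<Rightarrow> nat \<Rightarrow> real) \<Rightarrow> (nat \<Rightarrow> nat \<Rightarrow> real) \<Rightarrow> bool" where
  "penrose m S M X \<longleftrightarrow>
     (\<forall>i j. \<not> (i \<in> S \<and> j < m) \<longrightarrow> X i j = 0) \<and>
     (\<forall>i<m. \<forall>j\<in>S. (\<Sum>l\<in>S. \<Sum>r<m. M i l * X l r * M r j) = M i j) \<and>
     (\<forall>i\<in>S. \<forall>j<m. (\<Sum>r<m. \<Sum>l\<in>S. X i r * M r l * X l j) = X i j) \<and>
     (\<forall>i<m. \<forall>j<m. (\<Sum>l\<in>S. M i l * X l j) = (\<Sum>l\<in>S. M j l * X l i)) \<and>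
     (\<forall>i\<in>S. \<forall>j\<in>S. (\<Sum>r<m. X i r * M r j) = (\<Sum>r<m. X j r * M r i))"

definition pinv :: "nat \<Rightarrow> nat set \<Rightarrow> (nat \<Rightarrow> nat \<Rightarrow> real) \<Rightarrow> nat \<Rightarrow> nat \<Rightarrow> real" where
  "pinv m S M = (THE X. penrose m S M X)"

definition ls_on :: "nat \<Rightarrow> (nat \<Rightarrow> nat \<Rightarrow> real) \<Rightarrow> nat set \<Rightarrow> (nat \<Rightarrow> real) \<Rightarrow> nat \<Rightarrow> real" where
  "ls_on m A S y = (\<lambda>i. if i \<in> S then (\<Sum>r<m. pinv m S A i r * y r) else 0)"

definition sea_S :: "nat \<Rightarrow> nat \<Rightarrow> (nat \<Rightarrow> real) \<Rightarrow> nat set" where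
  "sea_S n k X = largest n k X"

definition sea_x :: "nat \<Rightarrow> nat \<Rightarrow> (nat \<Rightarrow> nat \<Rightarrow> real) \<Rightarrow> nat \<Rightarrow> (nat \<Rightarrow> real) \<Rightarrow> (nat \<Rightarrow> real) \<Rightarrow> nat \<Rightarrow> real" where
  "sea_x m n A k y X = ls_on m A (sea_S n k X) y"

fun sea_X :: "nat \<Rightarrow> nat \<Rightarrow> (nat \<Rightarrow> nat \<Rightarrow> real) \<Rightarrow> nat \<Rightarrow> (nat \<Rightarrow> real) \<Rightarrow> (nat \<Rightarrow> real) \<Rightarrow> real \<Rightarrow> nat \<Rightarrow> nat \<Rightarrow> real" where
  "sea_X m n A k y X0 \<eta> 0 = X0"
| "sea_X m n A k y X0 \<eta> (Suc t) =
     (let X = sea_X m n A k y X0 \<eta> t; x = sea_x m n A k y X;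
          g = tmat_vec m A (\<lambda>i. mat_vec n A x i - y i)
      in (\<lambda>i. X i - \<eta> * g i))"

definition oracle_u :: "real \<Rightarrow> (nat \<Rightarrow> real) \<Rightarrow> nat set \<Rightarrow> nat \<Rightarrow> real" where
  "oracle_u \<eta> xs St = (\<lambda>i. if i \<in> {j. xs j \<noteq> 0} - St then - \<eta> * xs i else 0)"

end

theory Submission
  imports Defs "HOL-Analysis.Convex"
begin


definition ip :: "nat \<Rightarrow> (nat \<Rightarrow> real) \<Rightarrow> (nat \<Rightarrow> real) \<Rightarrow> real" where
  "ip N u v = (\<Sum>i<N. u i * v i)"

lemma ip_commute: "ip N u v = ip N v u"
  unfolding ip_def by (simp add: mult.commute)

lemma ip_add_left: "ip N (\<lambda>i. a i + b i) v = ip N a v + ip N b v"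
  unfolding ip_def by (simp add: distrib_right sum.distrib)

lemma ip_diff_left: "ip N (\<lambda>i. a i - b i) v = ip N a v - ip N b v"
  unfolding ip_def by (simp add: left_diff_distrib sum_subtractf)

lemma ip_scale_left: "ip N (\<lambda>i. c * a i) v = c * ip N a v"
  unfolding ip_def by (simp add: sum_distrib_left mult.assoc)

lemma ip_nonneg: "ip N u u \<ge> 0"
  unfolding ip_def by (auto intro: sum_nonneg)

lemma norm2_ip: "norm2 N u = sqrt (ip N u u)"
  unfolding norm2_def ip_def by (simp add: power2_eq_square)

lemma norm2_sq: "(norm2 N u)\<^sup>2 = ip N u u"
  by (simp add: norm2_ip ip_nonneg)

lemma norm2_nonneg: "norm2 N u \<ge> 0"
  by (simp add: norm2_ip ip_nonneg)

lemma ip_zero_iff: "ip N u u = 0 \<longleftrightarrow> (\<forall>i<N. u i = 0)"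
  unfolding ip_def by (auto simp: sum_nonneg_eq_0_iff)

lemma ip_CS: "\<bar>ip N u v\<bar> \<le> norm2 N u * norm2 N v"
proof -
  have "(ip N u v)\<^sup>2 \<le> ip N u u * ip N v v"
    unfolding ip_def using Cauchy_Schwarz_ineq_sum[of u v "{..<N}"]
    by (simp add: power2_eq_square)
  then have "sqrt ((ip N u v)\<^sup>2) \<le> sqrt (ip N u u * ip N v v)"
    using real_sqrt_le_mono by blast
  then show ?thesis by (simp add: norm2_ip real_sqrt_mult)
qed

lemma mat_vec_add: "mat_vec n A (\<lambda>j. u j + v j) = (\<lambda>i. mat_vec n A u i + mat_vec n A v i)"
  unfolding mat_vec_def by (simp add: distrib_left sum.distrib)

lemma mat_vec_diff: "mat_vec n A (\<lambda>j. u j - v j) = (\<lambda>i. mat_vec n A u i - mat_vec n A v i)"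
  unfolding mat_vec_def by (simp add: right_diff_distrib sum_subtractf)

lemma mat_vec_scale: "mat_vec n A (\<lambda>j. c * u j) = (\<lambda>i. c * mat_vec n A u i)"
  unfolding mat_vec_def by (simp add: sum_distrib_left algebra_simps)

lemma mat_vec_zero: "(\<forall>j<n. u j = 0) \<Longrightarrow> mat_vec n A u = (\<lambda>i. 0)"
  unfolding mat_vec_def by simp

lemma ip_zero_left: "(\<forall>j<N. u j = 0) \<Longrightarrow> ip N u v = 0"
  unfolding ip_def by simp

lemma ip_mat_vec: "ip m (mat_vec n A u) w = (\<Sum>j<n. u j * (\<Sum>r<m. A r j * w r))"
  unfolding ip_def mat_vec_def
  by (simp add: sum_distrib_left sum_distrib_right sum.swap[of _ "{..<m}"] algebra_simps)

lemma sum_supp: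
  fixes u f :: "nat \<Rightarrow> real"
  assumes "T \<subseteq> {..<n}" "\<forall>j. j \<notin> T \<longrightarrow> u j = 0"
  shows "(\<Sum>j<n. u j * f j) = (\<Sum>j\<in>T. u j * f j)"
  using assms by (intro sum.mono_neutral_right) auto

definition Dset :: "nat \<Rightarrow> nat \<Rightarrow> (nat \<Rightarrow> nat \<Rightarrow> real) \<Rightarrow> nat \<Rightarrow> real set" where
  "Dset m n A l = {\<delta>. \<delta> \<ge> 0 \<and> (\<forall>x. sparse n l x \<longrightarrow>
      (1 - \<delta>) * (norm2 n x)\<^sup>2 \<le> (norm2 m (mat_vec n A x))\<^sup>2 \<and>
      (norm2 m (mat_vec n A x))\<^sup>2 \<le> (1 + \<delta>) * (norm2 n x)\<^sup>2)}"

lemma rip_const_Dset: "rip_const m n A l = Inf (Dset m n A l)"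
  unfolding rip_const_def Dset_def ..

lemma Dset_nonempty: "Dset m n A l \<noteq> {}"
proof -
  define F where "F = (\<Sum>r<m. \<Sum>j<n. (A r j)\<^sup>2)"
  have F0: "F \<ge> 0" unfolding F_def by (simp add: sum_nonneg)
  have up: "ip m (mat_vec n A x) (mat_vec n A x) \<le> F * ip n x x" for x
  proof -
    have "ip m (mat_vec n A x) (mat_vec n A x) = (\<Sum>r<m. (\<Sum>j<n. A r j * x j)\<^sup>2)"
      unfolding ip_def mat_vec_def by (simp add: power2_eq_square)
    also have "\<dots> \<le> (\<Sum>r<m. (\<Sum>j<n. (A r j)\<^sup>2) * (\<Sum>j<n. (x j)\<^sup>2))"
      by (intro sum_mono Cauchy_Schwarz_ineq_sum)
    also have "\<dots> = F * ip n x x"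
      unfolding F_def ip_def by (simp add: sum_distrib_right power2_eq_square)
    finally show ?thesis .
  qed
  have "F + 1 \<in> Dset m n A l"
    unfolding Dset_def
  proof (safe)
    show "0 \<le> F + 1" using F0 by simp
  next
    fix x
    show "(1 - (F + 1)) * (norm2 n x)\<^sup>2 \<le> (norm2 m (mat_vec n A x))\<^sup>2"
      using F0 ip_nonneg[of n x] ip_nonneg[of m "mat_vec n A x"]
      by (simp add: norm2_sq) (smt (verit) mult_nonneg_nonneg)
    show "(norm2 m (mat_vec n A x))\<^sup>2 \<le> (1 + (F + 1)) * (norm2 n x)\<^sup>2"
      using up[of x] ip_nonneg[of n x] F0 unfolding norm2_sq
      by (smt (verit, best) mult_right_mono)
  qed
  then show ?thesis by blast
qed

lemma Dset_bdd: "bdd_below (Dset m n A l)"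
  unfolding Dset_def by (rule bdd_belowI[of _ 0]) auto

lemma rip_nonneg: "rip_const m n A l \<ge> 0"
  unfolding rip_const_Dset using Dset_nonempty
  by (intro cInf_greatest) (auto simp: Dset_def)

lemma rip_mono:
  assumes "l \<le> l'" shows "rip_const m n A l \<le> rip_const m n A l'"
proof -
  have "Dset m n A l' \<subseteq> Dset m n A l"
    unfolding Dset_def sparse_def using assms by auto
  then show ?thesis unfolding rip_const_Dset
    using Dset_nonempty Dset_bdd by (intro cInf_superset_mono) auto
qed

lemma rip_bounds:
  assumes "sparse n l x"
  shows "(1 - rip_const m n A l) * ip n x x \<le> ip m (mat_vec n A x) (mat_vec n A x)"
    and "ip m (mat_vec n A x) (mat_vec n A x) \<le> (1 + rip_const m n A l) * ip n x x"
proof -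
  let ?a = "ip n x x" and ?b = "ip m (mat_vec n A x) (mat_vec n A x)"
  have H: "(1 - d) * ?a \<le> ?b \<and> ?b \<le> (1 + d) * ?a" if "d \<in> Dset m n A l" for d
    using that assms unfolding Dset_def norm2_sq by auto
  obtain d0 where d0: "d0 \<in> Dset m n A l" using Dset_nonempty by blast
  have "(1 - rip_const m n A l) * ?a \<le> ?b \<and> ?b \<le> (1 + rip_const m n A l) * ?a"
  proof (cases "?a = 0")
    case True
    then show ?thesis using H[OF d0] by simp
  next
    case False
    then have apos: "?a > 0" using ip_nonneg[of n x] by simp
    have l1: "1 - ?b / ?a \<le> rip_const m n A l"
      unfolding rip_const_Dset using Dset_nonempty
    proof (intro cInf_greatest)
      fix d assume "d \<in> Dset m n A l"
      then have "(1 - d) * ?a \<le> ?b" using H by blast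
      then show "1 - ?b / ?a \<le> d" using apos by (simp add: field_simps)
    qed auto
    have l2: "?b / ?a - 1 \<le> rip_const m n A l"
      unfolding rip_const_Dset using Dset_nonempty
    proof (intro cInf_greatest)
      fix d assume "d \<in> Dset m n A l"
      then have "?b \<le> (1 + d) * ?a" using H by blast
      then show "?b / ?a - 1 \<le> d" using apos by (simp add: field_simps)
    qed auto
    show ?thesis using l1 l2 apos by (simp add: field_simps)
  qed
  then show "(1 - rip_const m n A l) * ?a \<le> ?b" "?b \<le> (1 + rip_const m n A l) * ?a" by auto
qed



lemma ip_add_sq: "ip N (\<lambda>i. a i + b i) (\<lambda>i. a i + b i) = ip N a a + 2 * ip N a b + ip N b b"
  unfolding ip_def by (simp add: sum.distrib sum_distrib_left algebra_simps)

lemma ip_diff_sq: "ip N (\<lambda>i. a i - b i) (\<lambda>i. a i - b i) = ip N a a - 2 * ip N a b + ip N b b"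
  unfolding ip_def by (simp add: sum.distrib sum_subtractf sum_distrib_left algebra_simps)

lemma ip_scale_right: "ip N v (\<lambda>i. c * a i) = c * ip N v a"
  using ip_scale_left[of N c a v] by (simp add: ip_commute)

lemma arith_half:
  fixes P Q R p q r \<delta> :: real
  assumes "(1 - \<delta>) * (p + 2*q + r) \<le> P + 2*Q + R" "P + 2*Q + R \<le> (1 + \<delta>) * (p + 2*q + r)"
    "(1 - \<delta>) * (p - 2*q + r) \<le> P - 2*Q + R" "P - 2*Q + R \<le> (1 + \<delta>) * (p - 2*q + r)"
  shows "\<bar>Q - q\<bar> \<le> \<delta> / 2 * (p + r)"
  using assms unfolding abs_le_iff by (simp add: ring_distribs)

lemma rip_ip_half:
  assumes "card {j. j < n \<and> (u j \<noteq> 0 \<or> v j \<noteq> 0)} \<le> l"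
  shows "\<bar>ip m (mat_vec n A u) (mat_vec n A v) - ip n u v\<bar>
          \<le> rip_const m n A l / 2 * (ip n u u + ip n v v)"
proof -
  let ?d = "rip_const m n A l"
  define s where "s = (\<lambda>j. u j + v j)"
  define d where "d = (\<lambda>j. u j - v j)"
  have fin: "finite {j. j < n \<and> (u j \<noteq> 0 \<or> v j \<noteq> 0)}" by auto
  have ss: "Defs.sparse n l s" unfolding Defs.sparse_def s_def
    by (rule le_trans[OF card_mono[OF fin] assms]) auto
  have sd: "Defs.sparse n l d" unfolding Defs.sparse_def d_def
    by (rule le_trans[OF card_mono[OF fin] assms]) auto
  let ?Au = "mat_vec n A u" and ?Av = "mat_vec n A v"
  have As: "mat_vec n A s = (\<lambda>i. ?Au i + ?Av i)" unfolding s_def by (rule mat_vec_add)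
  have Ad: "mat_vec n A d = (\<lambda>i. ?Au i - ?Av i)" unfolding d_def by (rule mat_vec_diff)
  have e1: "ip m (mat_vec n A s) (mat_vec n A s) = ip m ?Au ?Au + 2 * ip m ?Au ?Av + ip m ?Av ?Av"
    unfolding As by (rule ip_add_sq)
  have e2: "ip m (mat_vec n A d) (mat_vec n A d) = ip m ?Au ?Au - 2 * ip m ?Au ?Av + ip m ?Av ?Av"
    unfolding Ad by (rule ip_diff_sq)
  have e3: "ip n s s = ip n u u + 2 * ip n u v + ip n v v" unfolding s_def by (rule ip_add_sq)
  have e4: "ip n d d = ip n u u - 2 * ip n u v + ip n v v" unfolding d_def by (rule ip_diff_sq)
  note b1 = rip_bounds[OF ss, of m A] and b2 = rip_bounds[OF sd, of m A]
  show ?thesis using e1 e2 e3 e4 b1 b2 by (intro arith_half) simp_all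
qed

lemma mat_vec_zero': "(\<forall>j<n. u j = 0) \<Longrightarrow> \<forall>i<m. mat_vec n A u i = 0"
  using mat_vec_zero by metis

lemma rip_ip:
  assumes "card {j. j < n \<and> (u j \<noteq> 0 \<or> v j \<noteq> 0)} \<le> l"
  shows "\<bar>ip m (mat_vec n A u) (mat_vec n A v) - ip n u v\<bar>
          \<le> rip_const m n A l * norm2 n u * norm2 n v"
proof -
  let ?d = "rip_const m n A l"
  have d0: "?d \<ge> 0" by (rule rip_nonneg)
  show ?thesis
  proof (cases "ip n u u = 0 \<or> ip n v v = 0")
    case True
    then show ?thesis
    proof
      assume "ip n u u = 0"
      then have z: "\<forall>j<n. u j = 0" by (simp add: ip_zero_iff)
      then have "ip m (mat_vec n A u) (mat_vec n A v) = 0" "ip n u v = 0"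
        by (auto intro!: ip_zero_left mat_vec_zero')
      then show ?thesis using d0 norm2_nonneg[of n u] norm2_nonneg[of n v] by simp
    next
      assume "ip n v v = 0"
      then have z: "\<forall>j<n. v j = 0" by (simp add: ip_zero_iff)
      then have "ip m (mat_vec n A v) (mat_vec n A u) = 0" "ip n v u = 0"
        by (auto intro!: ip_zero_left mat_vec_zero')
      then show ?thesis using d0 norm2_nonneg[of n u] norm2_nonneg[of n v]
        by (simp add: ip_commute)
    qed
  next
    case False
    define a where "a = norm2 n u"
    define b where "b = norm2 n v"
    have a0: "a > 0" using False ip_nonneg[of n u] unfolding a_def norm2_ip by auto
    have b0: "b > 0" using False ip_nonneg[of n v] unfolding b_def norm2_ip by auto
    have ua: "ip n u u = a\<^sup>2" unfolding a_def by (simp add: norm2_sq)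
    have vb: "ip n v v = b\<^sup>2" unfolding b_def by (simp add: norm2_sq)
    define c where "c = sqrt (b / a)"
    have c0: "c > 0" unfolding c_def using a0 b0 by simp
    have c2: "c\<^sup>2 = b / a" unfolding c_def using a0 b0 by simp
    define u1 where "u1 = (\<lambda>j. c * u j)"
    define v1 where "v1 = (\<lambda>j. (1/c) * v j)"
    have "{j. j < n \<and> (u1 j \<noteq> 0 \<or> v1 j \<noteq> 0)} = {j. j < n \<and> (u j \<noteq> 0 \<or> v j \<noteq> 0)}"
      unfolding u1_def v1_def using c0 by auto
    then have H: "\<bar>ip m (mat_vec n A u1) (mat_vec n A v1) - ip n u1 v1\<bar>
          \<le> ?d / 2 * (ip n u1 u1 + ip n v1 v1)" using rip_ip_half[of n u1 v1 l m A] assms by simp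
    have q1: "ip m (mat_vec n A u1) (mat_vec n A v1) = ip m (mat_vec n A u) (mat_vec n A v)"
      unfolding u1_def v1_def mat_vec_scale ip_scale_left ip_scale_right using c0 by simp
    have q2: "ip n u1 v1 = ip n u v"
      unfolding u1_def v1_def ip_scale_left ip_scale_right using c0 by simp
    have "ip n u1 u1 = c\<^sup>2 * a\<^sup>2"
      unfolding u1_def ip_scale_left ip_scale_right ua by (simp add: power2_eq_square)
    also have "\<dots> = a * b" unfolding c2 using a0 by (simp add: power2_eq_square)
    finally have q3: "ip n u1 u1 = a * b" .
    have "ip n v1 v1 = b\<^sup>2 / c\<^sup>2"
      unfolding v1_def ip_scale_left ip_scale_right vb by (simp add: power2_eq_square)
    also have "\<dots> = a * b" unfolding c2 using a0 b0 by (simp add: power2_eq_square)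
    finally have q4: "ip n v1 v1 = a * b" .
    show ?thesis using H q1 q2 q3 q4 unfolding a_def b_def by simp
  qed
qed



lemma largest_sub: "largest n k v \<subseteq> {..<n}"
  unfolding largest_def by auto

lemma largest_card: "card (largest n k v) \<le> k"
proof -
  define pr where "pr = (\<lambda>j i. \<bar>v j\<bar> > \<bar>v i\<bar> \<or> (\<bar>v j\<bar> = \<bar>v i\<bar> \<and> j > i))"
  define rk where "rk = (\<lambda>i. card {j. j < n \<and> pr j i})"
  have L: "largest n k v = {i. i < n \<and> rk i < k}"
    unfolding largest_def rk_def pr_def by simp
  have tr: "pr a c" if "pr a b" "pr b c" for a b c using that unfolding pr_def by auto
  have irr: "\<not> pr a a" for a unfolding pr_def by auto
  have tot: "pr a b \<or> pr b a" if "a \<noteq> b" for a b using that unfolding pr_def by auto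
  have lt: "rk i < rk i'" if "pr i i'" "i < n" for i i'
  proof -
    have "{j. j < n \<and> pr j i} \<subset> {j. j < n \<and> pr j i'}"
      using that tr irr by blast
    then show ?thesis unfolding rk_def by (intro psubset_card_mono) auto
  qed
  have inj: "inj_on rk (largest n k v)"
  proof (rule inj_onI)
    fix i i' assume "i \<in> largest n k v" "i' \<in> largest n k v" "rk i = rk i'"
    then show "i = i'" using lt tot unfolding L by (metis less_irrefl mem_Collect_eq)
  qed
  have "card (largest n k v) \<le> card {..<k}"
    by (rule card_inj_on_le[OF inj]) (auto simp: L)
  then show ?thesis by simp
qed



lemma sum_assoc3:
  fixes f :: "'r \<Rightarrow> real"
  assumes "finite L" "finite R"
  shows "(\<Sum>l\<in>L. (\<Sum>r\<in>R. f r * g r l) * h l) = (\<Sum>r\<in>R. f r * (\<Sum>l\<in>L. g r l * h l))"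
proof -
  have "(\<Sum>l\<in>L. (\<Sum>r\<in>R. f r * g r l) * h l) = (\<Sum>l\<in>L. \<Sum>r\<in>R. f r * g r l * h l)"
    by (simp add: sum_distrib_right)
  also have "\<dots> = (\<Sum>r\<in>R. \<Sum>l\<in>L. f r * g r l * h l)" by (rule sum.swap)
  also have "\<dots> = (\<Sum>r\<in>R. f r * (\<Sum>l\<in>L. g r l * h l))"
    by (simp add: sum_distrib_left mult.assoc)
  finally show ?thesis .
qed

definition INJ :: "nat \<Rightarrow> nat set \<Rightarrow> (nat \<Rightarrow> nat \<Rightarrow> real) \<Rightarrow> bool" where
  "INJ m S A \<longleftrightarrow> (\<forall>w. (\<forall>r<m. (\<Sum>j\<in>S. A r j * w j) = 0) \<longrightarrow> (\<forall>j\<in>S. w j = 0))"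

definition PX :: "nat \<Rightarrow> nat set \<Rightarrow> (nat \<Rightarrow> nat \<Rightarrow> real) \<Rightarrow> (nat \<Rightarrow> nat \<Rightarrow> real) \<Rightarrow> bool" where
  "PX m S A X \<longleftrightarrow> (\<forall>i j. \<not> (i \<in> S \<and> j < m) \<longrightarrow> X i j = 0) \<and>
     (\<forall>i\<in>S. \<forall>j\<in>S. (\<Sum>r<m. X i r * A r j) = (if i = j then 1 else 0)) \<and>
     (\<forall>i<m. \<forall>j<m. (\<Sum>l\<in>S. A i l * X l j) = (\<Sum>l\<in>S. A j l * X l i))"

lemma INJ_insert:
  assumes "INJ m (insert a S) A" "a \<notin> S" "finite S"
  shows "INJ m S A"
  unfolding INJ_def
proof (intro allI impI)
  fix w assume h: "\<forall>r<m. (\<Sum>j\<in>S. A r j * w j) = 0"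
  define w' where "w' = w(a := 0)"
  have "\<forall>r<m. (\<Sum>j\<in>insert a S. A r j * w' j) = 0"
  proof (intro allI impI)
    fix r assume "r < m"
    have "(\<Sum>j\<in>insert a S. A r j * w' j) = (\<Sum>j\<in>S. A r j * w' j)"
      using assms by (simp add: w'_def)
    also have "\<dots> = (\<Sum>j\<in>S. A r j * w j)"
      using assms by (intro sum.cong) (auto simp: w'_def)
    finally show "(\<Sum>j\<in>insert a S. A r j * w' j) = 0" using h \<open>r < m\<close> by simp
  qed
  then have "\<forall>j\<in>insert a S. w' j = 0" using assms(1) unfolding INJ_def by blast
  then show "\<forall>j\<in>S. w j = 0"
  proof (intro ballI)
    fix j assume "\<forall>j\<in>insert a S. w' j = 0" "j \<in> S"
    then have "w' j = 0" "j \<noteq> a" using assms(2) by auto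
    then show "w j = 0" unfolding w'_def by simp
  qed
qed

lemma PX_exists:
  assumes "finite S" "INJ m S A"
  shows "\<exists>X. PX m S A X"
  using assms
proof (induction S rule: finite_induct)
  case empty
  show ?case by (rule exI[of _ "\<lambda>i j. 0"]) (simp add: PX_def)
next
  case (insert a S')
  then have "INJ m S' A" using INJ_insert[of m a S' A] by simp
  with insert.IH obtain X' where X': "PX m S' A X'" by blast
  have X'0: "\<And>i j. \<not> (i \<in> S' \<and> j < m) \<Longrightarrow> X' i j = 0" using X' unfolding PX_def by blast
  have X'M: "\<And>i j. i \<in> S' \<Longrightarrow> j \<in> S' \<Longrightarrow> (\<Sum>r<m. X' i r * A r j) = (if i = j then 1 else 0)"
    using X' unfolding PX_def by blast
  define P' where "P' = (\<lambda>i j. \<Sum>l\<in>S'. A i l * X' l j)"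
  have P's: "\<And>i j. i < m \<Longrightarrow> j < m \<Longrightarrow> P' i j = P' j i"
    using X' unfolding PX_def P'_def by blast
  define xv where "xv = (\<lambda>l. \<Sum>q<m. X' l q * A q a)"
  define p where "p = (\<lambda>r. \<Sum>l\<in>S'. A r l * xv l)"
  define w where "w = (\<lambda>r. A r a - p r)"
  define nw where "nw = (\<Sum>r<m. w r * w r)"
  have pP: "p r = (\<Sum>q<m. P' r q * A q a)" for r
    unfolding p_def xv_def P'_def
    using sum_assoc3[of "{..<m}" S' "A r" X' "\<lambda>q. A q a"] insert.hyps(1)
    by (simp add: sum_distrib_left mult.assoc)
  have PA: "(\<Sum>r<m. P' q r * A r j) = A q j" if "j \<in> S'" for q j
  proof -
    have "(\<Sum>r<m. P' q r * A r j) = (\<Sum>l\<in>S'. A q l * (\<Sum>r<m. X' l r * A r j))"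
      unfolding P'_def using sum_assoc3[of "{..<m}" S' "A q" X' "\<lambda>r. A r j"] insert.hyps(1)
      by simp
    also have "\<dots> = (\<Sum>l\<in>S'. A q l * (if l = j then 1 else 0))"
      by (intro sum.cong) (simp_all add: X'M that)
    also have "\<dots> = A q j" using that insert.hyps(1) by (simp add: if_distrib sum.delta cong: if_cong)
    finally show ?thesis .
  qed
  have F1: "(\<Sum>r<m. w r * A r j) = 0" if "j \<in> S'" for j
  proof -
    have "(\<Sum>r<m. p r * A r j) = (\<Sum>r<m. (\<Sum>q<m. P' r q * A q a) * A r j)" by (simp add: pP)
    also have "\<dots> = (\<Sum>r<m. \<Sum>q<m. A q a * (P' q r * A r j))"
    proof (intro sum.cong refl)
      fix r assume r: "r \<in> {..<m}"
      show "(\<Sum>q<m. P' r q * A q a) * A r j = (\<Sum>q<m. A q a * (P' q r * A r j))"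
        unfolding sum_distrib_right using r by (intro sum.cong refl) (simp add: P's mult_ac)
    qed
    also have "\<dots> = (\<Sum>q<m. A q a * (\<Sum>r<m. P' q r * A r j))"
      by (subst sum.swap) (simp add: sum_distrib_left)
    also have "\<dots> = (\<Sum>q<m. A q a * A q j)" using PA[OF that] by simp
    finally have "(\<Sum>r<m. p r * A r j) = (\<Sum>q<m. A q a * A q j)" .
    then show ?thesis unfolding w_def by (simp add: left_diff_distrib sum_subtractf)
  qed
  have F2: "(\<Sum>r<m. w r * p r) = 0"
  proof -
    have "(\<Sum>r<m. w r * p r) = (\<Sum>l\<in>S'. (\<Sum>r<m. w r * A r l) * xv l)"
      unfolding p_def using sum_assoc3[of S' "{..<m}" w A xv] insert.hyps(1) by simp
    also have "\<dots> = 0" using F1 by simp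
    finally show ?thesis .
  qed
  have F3: "(\<Sum>r<m. w r * A r a) = nw"
  proof -
    have "(\<Sum>r<m. w r * A r a) = (\<Sum>r<m. w r * w r + w r * p r)"
      by (intro sum.cong) (simp_all add: w_def algebra_simps)
    then show ?thesis using F2 unfolding nw_def by (simp add: sum.distrib)
  qed
  have F4: "nw > 0"
  proof (rule ccontr)
    assume "\<not> nw > 0"
    moreover have "nw \<ge> 0" unfolding nw_def by (auto intro: sum_nonneg)
    ultimately have "nw = 0" by simp
    then have wz: "\<forall>r<m. w r = 0" unfolding nw_def by (auto simp: sum_nonneg_eq_0_iff)
    define cf where "cf = (\<lambda>j. if j = a then 1 else - xv j)"
    have "\<forall>r<m. (\<Sum>j\<in>insert a S'. A r j * cf j) = 0"
    proof (intro allI impI)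
      fix r assume "r < m"
      have "(\<Sum>j\<in>insert a S'. A r j * cf j) = A r a - (\<Sum>j\<in>S'. A r j * xv j)"
      proof -
        have "(\<Sum>j\<in>S'. A r j * cf j) = (\<Sum>j\<in>S'. - (A r j * xv j))"
          using insert.hyps by (intro sum.cong) (auto simp: cf_def)
        then show ?thesis using insert.hyps by (simp add: cf_def sum_negf)
      qed
      also have "\<dots> = w r" unfolding w_def p_def ..
      finally show "(\<Sum>j\<in>insert a S'. A r j * cf j) = 0" using wz \<open>r < m\<close> by simp
    qed
    then have "cf a = 0" using insert.prems unfolding INJ_def by blast
    then show False unfolding cf_def by simp
  qed
  define X where "X = (\<lambda>i q. if q < m then (if i = a then w q / nw
                     else if i \<in> S' then X' i q - xv i * w q / nw else 0) else 0)"
  have C1: "\<forall>i j. \<not> (i \<in> insert a S' \<and> j < m) \<longrightarrow> X i j = 0" unfolding X_def by auto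
  have C2: "(\<Sum>r<m. X i r * A r j) = (if i = j then 1 else 0)"
    if "i \<in> insert a S'" "j \<in> insert a S'" for i j
  proof (cases "i = a")
    case True
    have "(\<Sum>r<m. X i r * A r j) = (\<Sum>r<m. w r * A r j) / nw"
      unfolding X_def True by (simp add: sum_divide_distrib)
    then show ?thesis using that True F1 F3 F4 insert.hyps(2) by auto
  next
    case False
    then have iS: "i \<in> S'" using that by simp
    have "(\<Sum>r<m. X i r * A r j) = (\<Sum>r<m. X' i r * A r j - xv i * (w r * A r j) / nw)"
      unfolding X_def using False iS by (intro sum.cong) (auto simp: algebra_simps)
    also have "\<dots> = (\<Sum>r<m. X' i r * A r j) - xv i * (\<Sum>r<m. w r * A r j) / nw"
      by (simp add: sum_subtractf sum_divide_distrib sum_distrib_left)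
    finally have e: "(\<Sum>r<m. X i r * A r j) = (\<Sum>r<m. X' i r * A r j) - xv i * (\<Sum>r<m. w r * A r j) / nw" .
    show ?thesis
    proof (cases "j = a")
      case True
      then show ?thesis using e F3 F4 False by (simp add: xv_def)
    next
      case False
      then have "j \<in> S'" using that by simp
      then show ?thesis using e F1 X'M iS by simp
    qed
  qed
  have C3: "(\<Sum>l\<in>insert a S'. A i l * X l j) = P' i j + w i * w j / nw"
    if "i < m" "j < m" for i j
  proof -
    have "(\<Sum>l\<in>insert a S'. A i l * X l j) = A i a * (w j / nw) + (\<Sum>l\<in>S'. A i l * X l j)"
      using insert.hyps that by (simp add: X_def)
    also have "(\<Sum>l\<in>S'. A i l * X l j) = (\<Sum>l\<in>S'. A i l * X' l j - A i l * xv l * w j / nw)"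
      using insert.hyps that by (intro sum.cong) (auto simp: X_def algebra_simps)
    also have "\<dots> = P' i j - p i * w j / nw"
      unfolding P'_def p_def by (simp add: sum_subtractf sum_divide_distrib sum_distrib_right)
    finally have e: "(\<Sum>l\<in>insert a S'. A i l * X l j) = A i a * (w j / nw) + (P' i j - p i * w j / nw)" .
    have "A i a * (w j / nw) + (P' i j - p i * w j / nw) = P' i j + (A i a - p i) * w j / nw"
      by (simp add: algebra_simps add_divide_distrib diff_divide_distrib)
    then show ?thesis using e unfolding w_def by simp
  qed
  have "PX m (insert a S') A X"
    unfolding PX_def
  proof (intro conjI)
    show "\<forall>i j. \<not> (i \<in> insert a S' \<and> j < m) \<longrightarrow> X i j = 0" by (rule C1)
    show "\<forall>i\<in>insert a S'. \<forall>j\<in>insert a S'. (\<Sum>r<m. X i r * A r j) = (if i = j then 1 else 0)"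
      using C2 by blast
    show "\<forall>i<m. \<forall>j<m. (\<Sum>l\<in>insert a S'. A i l * X l j) = (\<Sum>l\<in>insert a S'. A j l * X l i)"
    proof (intro allI impI)
      fix i j assume ij: "i < m" "j < m"
      show "(\<Sum>l\<in>insert a S'. A i l * X l j) = (\<Sum>l\<in>insert a S'. A j l * X l i)"
        unfolding C3[OF ij] C3[OF ij(2,1)] P's[OF ij] by (simp add: mult.commute)
    qed
  qed
  then show ?case by blast
qed



lemma delta_sum1:
  assumes "finite S" "i \<in> S"
  shows "(\<Sum>l\<in>S. (if i = l then 1 else 0) * (f l :: real)) = f i"
proof -
  have "(\<Sum>l\<in>S. (if i = l then 1 else 0) * f l) = (\<Sum>l\<in>S. if i = l then f l else 0)"
    by (intro sum.cong) auto
  then show ?thesis using assms by simp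
qed

lemma delta_sum2:
  assumes "finite S" "j \<in> S"
  shows "(\<Sum>l\<in>S. (f l :: real) * (if l = j then 1 else 0)) = f j"
proof -
  have "(\<Sum>l\<in>S. f l * (if l = j then 1 else 0)) = (\<Sum>l\<in>S. if j = l then f l else 0)"
    by (intro sum.cong) auto
  then show ?thesis using assms by simp
qed

lemma PX_penrose:
  assumes "PX m S A X" "finite S"
  shows "penrose m S A X"
proof -
  have X0: "\<And>i j. \<not> (i \<in> S \<and> j < m) \<Longrightarrow> X i j = 0" using assms unfolding PX_def by blast
  have XM: "\<And>i j. i \<in> S \<Longrightarrow> j \<in> S \<Longrightarrow> (\<Sum>r<m. X i r * A r j) = (if i = j then 1 else 0)"
    using assms unfolding PX_def by blast
  have sym: "\<And>i j. i < m \<Longrightarrow> j < m \<Longrightarrow> (\<Sum>l\<in>S. A i l * X l j) = (\<Sum>l\<in>S. A j l * X l i)"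
    using assms unfolding PX_def by blast
  have c2: "(\<Sum>l\<in>S. \<Sum>r<m. A i l * X l r * A r j) = A i j" if "i < m" "j \<in> S" for i j
  proof -
    have "(\<Sum>l\<in>S. \<Sum>r<m. A i l * X l r * A r j) = (\<Sum>l\<in>S. A i l * (\<Sum>r<m. X l r * A r j))"
      by (simp add: sum_distrib_left mult.assoc)
    also have "\<dots> = (\<Sum>l\<in>S. A i l * (if l = j then 1 else 0))"
      using that by (intro sum.cong) (simp_all add: XM)
    also have "\<dots> = A i j" using that assms(2) by (simp add: delta_sum1 delta_sum2)
    finally show ?thesis .
  qed
  have c3: "(\<Sum>r<m. \<Sum>l\<in>S. X i r * A r l * X l j) = X i j" if "i \<in> S" "j < m" for i j
  proof -
    have "(\<Sum>r<m. \<Sum>l\<in>S. X i r * A r l * X l j) = (\<Sum>l\<in>S. (\<Sum>r<m. X i r * A r l) * X l j)"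
      using sum_assoc3[of S "{..<m}" "X i" A "\<lambda>l. X l j"] assms(2)
      by (simp add: sum_distrib_left mult.assoc)
    also have "\<dots> = (\<Sum>l\<in>S. (if i = l then 1 else 0) * X l j)"
      using that by (intro sum.cong) (simp_all add: XM)
    also have "\<dots> = X i j" using that assms(2) by (simp add: delta_sum1 delta_sum2)
    finally show ?thesis .
  qed
  show ?thesis unfolding penrose_def
    using X0 c2 c3 sym XM by auto
qed

lemma penrose_XM:
  assumes "penrose m S A X" "finite S" "INJ m S A" "i \<in> S" "l \<in> S"
  shows "(\<Sum>r<m. X i r * A r l) = (if i = l then 1 else 0)"
proof -
  define w where "w = (\<lambda>i. (\<Sum>r<m. X i r * A r l) - (if i = l then 1 else 0))"
  have "\<forall>q<m. (\<Sum>i\<in>S. A q i * w i) = 0"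
  proof (intro allI impI)
    fix q assume q: "q < m"
    have "(\<Sum>i\<in>S. A q i * w i) = (\<Sum>i\<in>S. A q i * (\<Sum>r<m. X i r * A r l)) - (\<Sum>i\<in>S. A q i * (if i = l then 1 else 0))"
      unfolding w_def by (simp add: right_diff_distrib sum_subtractf)
    also have "(\<Sum>i\<in>S. A q i * (\<Sum>r<m. X i r * A r l)) = (\<Sum>i\<in>S. \<Sum>r<m. A q i * X i r * A r l)"
      by (simp add: sum_distrib_left mult.assoc)
    also have "\<dots> = A q l" using assms(1,5) q unfolding penrose_def by blast
    also have "(\<Sum>i\<in>S. A q i * (if i = l then 1 else 0)) = A q l"
      using assms(2,5) by (simp add: delta_sum2)
    finally show "(\<Sum>i\<in>S. A q i * w i) = 0" by simp
  qed
  then have "w i = 0" using assms(3,4) unfolding INJ_def by blast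
  then show ?thesis unfolding w_def by simp
qed

lemma penrose_unique:
  assumes pX: "penrose m S A X" and pY: "penrose m S A Y" and fin: "finite S" and inj: "INJ m S A"
  shows "X = Y"
proof -
  define P where "P = (\<lambda>i j. \<Sum>l\<in>S. A i l * X l j)"
  define Q where "Q = (\<lambda>i j. \<Sum>l\<in>S. A i l * Y l j)"
  have Psym: "\<And>i j. i < m \<Longrightarrow> j < m \<Longrightarrow> P i j = P j i" using pX unfolding penrose_def P_def by blast
  have Qsym: "\<And>i j. i < m \<Longrightarrow> j < m \<Longrightarrow> Q i j = Q j i" using pY unfolding penrose_def Q_def by blast
  have a: "(\<Sum>r<m. R i r * A r l) = A i l"
    if pZ: "penrose m S A Z" and R: "R = (\<lambda>i j. \<Sum>l\<in>S. A i l * Z l j)" and "i < m" "l \<in> S" for Z R i l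
  proof -
    have "(\<Sum>r<m. R i r * A r l) = (\<Sum>l'\<in>S. A i l' * (\<Sum>r<m. Z l' r * A r l))"
      unfolding R using sum_assoc3[of "{..<m}" S "A i" Z "\<lambda>r. A r l"] fin by simp
    also have "\<dots> = (\<Sum>l'\<in>S. \<Sum>r<m. A i l' * Z l' r * A r l)"
      by (simp add: sum_distrib_left mult.assoc)
    also have "\<dots> = A i l" using pZ that unfolding penrose_def by blast
    finally show ?thesis .
  qed
  have PQ: "P i j = Q i j" if "i < m" "j < m" for i j
  proof -
    have "P i j = (\<Sum>l\<in>S. (\<Sum>r<m. Q i r * A r l) * X l j)"
      unfolding P_def using a[OF pY Q_def \<open>i < m\<close>] by (intro sum.cong) simp_all
    also have "\<dots> = (\<Sum>r<m. Q i r * P r j)"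
      unfolding P_def using sum_assoc3[of S "{..<m}" "Q i" A "\<lambda>l. X l j"] fin by simp
    also have "\<dots> = (\<Sum>r<m. P j r * Q r i)"
      using that by (intro sum.cong) (simp_all add: Psym Qsym mult.commute)
    also have "\<dots> = (\<Sum>l\<in>S. (\<Sum>r<m. P j r * A r l) * Y l i)"
      unfolding Q_def using sum_assoc3[of S "{..<m}" "P j" A "\<lambda>l. Y l i"] fin by simp
    also have "\<dots> = Q j i"
      unfolding Q_def using a[OF pX P_def \<open>j < m\<close>] by (intro sum.cong) simp_all
    also have "\<dots> = Q i j" using Qsym that by simp
    finally show ?thesis .
  qed
  have XMX: "Z i j = (\<Sum>r<m. X i r * R r j)"
    if pZ: "penrose m S A Z" and R: "R = (\<lambda>i j. \<Sum>l\<in>S. A i l * Z l j)" and "i \<in> S" for Z R i j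
  proof -
    have "Z i j = (\<Sum>l\<in>S. (if i = l then 1 else 0) * Z l j)"
      using that fin by (simp add: delta_sum1)
    also have "\<dots> = (\<Sum>l\<in>S. (\<Sum>r<m. X i r * A r l) * Z l j)"
      using penrose_XM[OF pX fin inj \<open>i \<in> S\<close>] by (intro sum.cong) simp_all
    also have "\<dots> = (\<Sum>r<m. X i r * R r j)"
      unfolding R using sum_assoc3[of S "{..<m}" "X i" A "\<lambda>l. Z l j"] fin by simp
    finally show ?thesis .
  qed
  have "X i j = Y i j" for i j
  proof (cases "i \<in> S \<and> j < m")
    case True
    have "X i j = (\<Sum>r<m. X i r * P r j)" using XMX[OF pX P_def] True by blast
    also have "\<dots> = (\<Sum>r<m. X i r * Q r j)" using PQ True by (intro sum.cong) simp_all
    also have "\<dots> = Y i j" using XMX[OF pY Q_def] True by metis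
    finally show ?thesis .
  next
    case False
    then show ?thesis using pX pY unfolding penrose_def by simp
  qed
  then show ?thesis by blast
qed

lemma pinv_penrose:
  assumes "finite S" "INJ m S A"
  shows "penrose m S A (pinv m S A)"
proof -
  obtain X where "PX m S A X" using PX_exists assms by blast
  then have pX: "penrose m S A X" using PX_penrose assms by blast
  have "penrose m S A (THE X. penrose m S A X)"
    by (rule theI[of _ X]) (use pX penrose_unique assms in blast)+
  then show ?thesis unfolding pinv_def .
qed

lemma normal_eq:
  assumes "finite S" "S \<subseteq> {..<n}" "INJ m S A" "j \<in> S"
  shows "(\<Sum>r<m. A r j * (mat_vec n A (ls_on m A S y) r - y r)) = 0"
proof -
  define X where "X = pinv m S A"
  have pX: "penrose m S A X" unfolding X_def using pinv_penrose assms by blast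
  define P where "P = (\<lambda>i j. \<Sum>l\<in>S. A i l * X l j)"
  have Psym: "\<And>i j. i < m \<Longrightarrow> j < m \<Longrightarrow> P i j = P j i" using pX unfolding penrose_def P_def by blast
  have Ax: "mat_vec n A (ls_on m A S y) r = (\<Sum>q<m. P r q * y q)" for r
  proof -
    have "mat_vec n A (ls_on m A S y) r = (\<Sum>l<n. ls_on m A S y l * A r l)"
      unfolding mat_vec_def by (simp add: mult.commute)
    also have "\<dots> = (\<Sum>l\<in>S. ls_on m A S y l * A r l)"
      using assms(2) by (intro sum_supp) (auto simp: ls_on_def)
    also have "\<dots> = (\<Sum>l\<in>S. A r l * (\<Sum>q<m. X l q * y q))"
      unfolding ls_on_def X_def by (intro sum.cong) simp_all
    also have "\<dots> = (\<Sum>q<m. P r q * y q)"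
      unfolding P_def using sum_assoc3[of "{..<m}" S "A r" X y] assms(1) by simp
    finally show ?thesis .
  qed
  have PA: "(\<Sum>r<m. A r j * P r q) = A q j" if "q < m" for q
  proof -
    have "(\<Sum>r<m. A r j * P r q) = (\<Sum>r<m. P q r * A r j)"
      using that by (intro sum.cong) (simp_all add: Psym mult.commute)
    also have "\<dots> = (\<Sum>l\<in>S. A q l * (\<Sum>r<m. X l r * A r j))"
      unfolding P_def using sum_assoc3[of "{..<m}" S "A q" X "\<lambda>r. A r j"] assms(1) by simp
    also have "\<dots> = (\<Sum>l\<in>S. A q l * (if l = j then 1 else 0))"
      using penrose_XM[OF pX assms(1,3)] assms(4) by (intro sum.cong) simp_all
    also have "\<dots> = A q j" using assms(1,4) by (simp add: delta_sum2)
    finally show ?thesis .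
  qed
  have "(\<Sum>r<m. A r j * mat_vec n A (ls_on m A S y) r) = (\<Sum>r<m. A r j * (\<Sum>q<m. P r q * y q))"
    by (simp add: Ax)
  also have "\<dots> = (\<Sum>q<m. (\<Sum>r<m. A r j * P r q) * y q)"
    using sum_assoc3[of "{..<m}" "{..<m}" "\<lambda>r. A r j" P y] by simp
  also have "\<dots> = (\<Sum>q<m. A q j * y q)" using PA by simp
  finally show ?thesis by (simp add: right_diff_distrib sum_subtractf)
qed



lemma core:
  fixes m n k :: nat and A :: "nat \<Rightarrow> nat \<Rightarrow> real" and xs e y V :: "nat \<Rightarrow> real"
    and \<eta> :: real
  assumes "k > 0" 
    and d1lt: "rip_const m n A (2*k+1) < 1"
    and col: "\<forall>j<n. norm2 m (\<lambda>i. A i j) = 1"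
    and xsn: "\<forall>i\<ge>n. xs i = 0"
    and xsk: "card {i. xs i \<noteq> 0} \<le> k"
    and yd: "y = (\<lambda>i. mat_vec n A xs i + e i)"
    and eta: "\<eta> > 0"
    and i: "i < n"
  defines "S \<equiv> largest n k V"
  defines "x \<equiv> ls_on m A S y"
  defines "res \<equiv> (\<lambda>r. mat_vec n A x r - y r)"
  shows "\<bar>oracle_u \<eta> xs S i / \<eta> - tmat_vec m A res i\<bar>
           \<le> alpha_rip m n A k * norm2 n xs + gamma_rip m n A k * norm2 m e"
proof -
  define dk where "dk = rip_const m n A k"
  define d2 where "d2 = rip_const m n A (2*k)"
  define d1 where "d1 = rip_const m n A (2*k+1)"
  have dk0: "dk \<ge> 0" and d20: "d2 \<ge> 0" and d10: "d1 \<ge> 0"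
    unfolding dk_def d2_def d1_def by (simp_all add: rip_nonneg)
  have dkd1: "dk \<le> d1" unfolding dk_def d1_def by (rule rip_mono) simp
  have d2d1: "d2 \<le> d1" unfolding d2_def d1_def by (rule rip_mono) simp
  have d1l: "d1 < 1" using d1lt unfolding d1_def .
  have dkl: "dk < 1" using dkd1 d1l by simp
  have alpha: "alpha_rip m n A k = d1 * (1 + d2 / (1 - dk))"
    unfolding alpha_rip_def dk_def d2_def d1_def ..
  have gamma: "gamma_rip m n A k = 1 + d1 * sqrt (1 + dk) / (1 - dk)"
    unfolding gamma_rip_def dk_def d2_def d1_def ..
  have alpha0: "alpha_rip m n A k \<ge> 0" unfolding alpha using d10 d20 dkl by simp
  have gamma1: "gamma_rip m n A k \<ge> 1" unfolding gamma using d10 dk0 dkl by simp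
  have Ssub: "S \<subseteq> {..<n}" unfolding S_def by (rule largest_sub)
  have Scard: "card S \<le> k" unfolding S_def by (rule largest_card)
  have Sfin: "finite S" using Ssub finite_subset by blast
  define Ss where "Ss = {j. xs j \<noteq> 0}"
  have Sssub: "Ss \<subseteq> {..<n}" unfolding Ss_def using xsn by (auto simp: not_less[symmetric])
  have Ssfin: "finite Ss" using Sssub finite_subset by blast
  have Sscard: "card Ss \<le> k" using xsk unfolding Ss_def .
  have INJ: "INJ m S A"
    unfolding INJ_def
  proof (intro allI impI)
    fix w assume h: "\<forall>r<m. (\<Sum>j\<in>S. A r j * w j) = 0"
    define w' where "w' = (\<lambda>j. if j \<in> S then w j else 0)"
    have "mat_vec n A w' r = (\<Sum>j\<in>S. A r j * w j)" for r
    proof -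
      have "mat_vec n A w' r = (\<Sum>j<n. w' j * A r j)" unfolding mat_vec_def by (simp add: mult.commute)
      also have "\<dots> = (\<Sum>j\<in>S. w' j * A r j)" using Ssub by (intro sum_supp) (auto simp: w'_def)
      also have "\<dots> = (\<Sum>j\<in>S. A r j * w j)" by (intro sum.cong) (auto simp: w'_def)
      finally show ?thesis .
    qed
    then have "ip m (mat_vec n A w') (mat_vec n A w') = 0" using h by (simp add: ip_def)
    moreover have "Defs.sparse n k w'" unfolding Defs.sparse_def
      by (rule le_trans[OF card_mono[OF Sfin] Scard]) (auto simp: w'_def split: if_splits)
    ultimately have "(1 - dk) * ip n w' w' \<le> 0" using rip_bounds(1)[of n k w' m A] unfolding dk_def by simp
    then have "ip n w' w' \<le> 0" using dkl by (simp add: mult_le_0_iff)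
    then have "ip n w' w' = 0" using ip_nonneg[of n w'] by simp
    then have "\<forall>j<n. w' j = 0" by (simp add: ip_zero_iff)
    then show "\<forall>j\<in>S. w j = 0" using Ssub by (auto simp: w'_def)
  qed
  have NE: "\<And>j. j \<in> S \<Longrightarrow> (\<Sum>r<m. A r j * res r) = 0"
    unfolding res_def x_def using normal_eq[OF Sfin Ssub INJ] by blast
  define w' where "w' = (\<lambda>j. if j \<in> S then x j - xs j else 0)"
  define z where "z = (\<lambda>j. if j \<in> S then 0 else xs j)"
  have xdec: "(\<lambda>j. x j - xs j) = (\<lambda>j. w' j - z j)"
    unfolding w'_def z_def x_def ls_on_def by auto
  have resd: "res = (\<lambda>r. (mat_vec n A w' r - mat_vec n A z r) - e r)"
  proof -
    have "mat_vec n A (\<lambda>j. x j - xs j) = mat_vec n A (\<lambda>j. w' j - z j)" by (simp add: xdec)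
    then have "(\<lambda>r. mat_vec n A x r - mat_vec n A xs r) = (\<lambda>r. mat_vec n A w' r - mat_vec n A z r)"
      by (simp add: mat_vec_diff)
    then show ?thesis unfolding res_def yd by (auto simp: fun_eq_iff)
  qed
  let ?Aw = "mat_vec n A w'" and ?Az = "mat_vec n A z"
  have w'S: "\<forall>j. j \<notin> S \<longrightarrow> w' j = 0" unfolding w'_def by simp
  have zS: "\<forall>j. j \<notin> Ss - S \<longrightarrow> z j = 0" unfolding z_def Ss_def by auto
  have spw: "Defs.sparse n k w'" unfolding Defs.sparse_def
    by (rule le_trans[OF card_mono[OF Sfin] Scard]) (use w'S in auto)
  define nw where "nw = norm2 n w'"
  define nz where "nz = norm2 n z"
  define ne where "ne = norm2 m e"
  have nw0: "nw \<ge> 0" and nz0: "nz \<ge> 0" and ne0: "ne \<ge> 0"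
    unfolding nw_def nz_def ne_def by (simp_all add: norm2_nonneg)
  have ipres: "ip m ?Aw res = 0"
  proof -
    have "ip m ?Aw res = (\<Sum>j<n. w' j * (\<Sum>r<m. A r j * res r))" by (rule ip_mat_vec)
    also have "\<dots> = (\<Sum>j\<in>S. w' j * (\<Sum>r<m. A r j * res r))" using Ssub w'S by (intro sum_supp) auto
    also have "\<dots> = 0" using NE by simp
    finally show ?thesis .
  qed
  have eqw: "ip m ?Aw ?Aw = ip m ?Aw ?Az + ip m ?Aw e"
  proof -
    have "ip m res ?Aw = ip m ?Aw ?Aw - ip m ?Az ?Aw - ip m e ?Aw"
      unfolding resd ip_diff_left ..
    then show ?thesis using ipres by (simp add: ip_commute)
  qed
  have wz0: "ip n w' z = 0" unfolding ip_def w'_def z_def by (intro sum.neutral) simp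
  have cwz: "card {j. j < n \<and> (w' j \<noteq> 0 \<or> z j \<noteq> 0)} \<le> 2 * k"
  proof -
    have "{j. j < n \<and> (w' j \<noteq> 0 \<or> z j \<noteq> 0)} \<subseteq> S \<union> Ss" using w'S zS by auto
    then have "card {j. j < n \<and> (w' j \<noteq> 0 \<or> z j \<noteq> 0)} \<le> card (S \<union> Ss)"
      using Sfin Ssfin by (intro card_mono) auto
    also have "\<dots> \<le> card S + card Ss" by (rule card_Un_le)
    finally show ?thesis using Scard Sscard by simp
  qed
  have T0: "\<bar>ip m ?Aw ?Az\<bar> \<le> d2 * nw * nz"
    using rip_ip[OF cwz, of m A] wz0 unfolding d2_def nw_def nz_def by simp
  have Awn: "norm2 m ?Aw \<le> sqrt (1 + dk) * nw"
  proof -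
    have "ip m ?Aw ?Aw \<le> (1 + dk) * ip n w' w'" using rip_bounds(2)[OF spw, of m A] unfolding dk_def .
    then have "sqrt (ip m ?Aw ?Aw) \<le> sqrt ((1 + dk) * ip n w' w')" by (rule real_sqrt_le_mono)
    then show ?thesis unfolding nw_def norm2_ip by (simp add: real_sqrt_mult)
  qed
  have Te: "\<bar>ip m ?Aw e\<bar> \<le> sqrt (1 + dk) * nw * ne"
    using ip_CS[of m ?Aw e] Awn ne0 unfolding ne_def by (meson mult_right_mono order_trans)
  have lowb: "(1 - dk) * nw\<^sup>2 \<le> ip m ?Aw ?Aw"
    using rip_bounds(1)[OF spw, of m A] unfolding dk_def nw_def norm2_sq .
  have nwb: "nw \<le> (d2 * nz + sqrt (1 + dk) * ne) / (1 - dk)"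
  proof (cases "nw = 0")
    case True
    have "0 \<le> (d2 * nz + sqrt (1 + dk) * ne) / (1 - dk)" using d20 nz0 ne0 dkl dk0 by (intro divide_nonneg_pos add_nonneg_nonneg mult_nonneg_nonneg) simp_all
    then show ?thesis using True by simp
  next
    case False
    then have nwp: "nw > 0" using nw0 by simp
    have "(1 - dk) * nw * nw \<le> (d2 * nz + sqrt (1 + dk) * ne) * nw"
      using lowb eqw T0 Te by (simp add: power2_eq_square algebra_simps) 
    then have "(1 - dk) * nw \<le> d2 * nz + sqrt (1 + dk) * ne" using nwp by simp
    then show ?thesis using dkl by (simp add: field_simps)
  qed
  define E where "E = (\<lambda>j. if j = i then 1 else 0 :: real)"
  have AE: "mat_vec n A E = (\<lambda>r. A r i)"
    unfolding mat_vec_def E_def using i by (auto simp: if_distrib cong: if_cong)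
  have nE: "norm2 n E = 1"
  proof -
    have "(\<Sum>j<n. (E j)\<^sup>2) = (\<Sum>j<n. if j = i then 1 else 0)" by (intro sum.cong) (auto simp: E_def)
    then show ?thesis unfolding norm2_def using i by simp
  qed
  have g: "tmat_vec m A res i = ip m (mat_vec n A E) res"
    unfolding tmat_vec_def AE ip_def ..
  have u: "oracle_u \<eta> xs S i / \<eta> = - z i"
    unfolding oracle_u_def z_def using eta by auto
  have bnd0: "alpha_rip m n A k * norm2 n xs + gamma_rip m n A k * norm2 m e \<ge> 0"
    using alpha0 gamma1 norm2_nonneg[of n xs] norm2_nonneg[of m e] by simp
  show ?thesis
  proof (cases "i \<in> S")
    case True
    have "tmat_vec m A res i = 0" unfolding tmat_vec_def using NE[OF True] .
    moreover have "z i = 0" unfolding z_def using True by simp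
    ultimately have "oracle_u \<eta> xs S i / \<eta> - tmat_vec m A res i = 0" using u by simp
    then show ?thesis using bnd0 by simp
  next
    case False
    let ?AE = "mat_vec n A E"
    have val: "oracle_u \<eta> xs S i / \<eta> - tmat_vec m A res i
       = - ip m ?AE ?Aw + (ip m ?AE ?Az - z i) + ip m ?AE e"
    proof -
      have "tmat_vec m A res i = ip m res ?AE" using g by (simp add: ip_commute)
      also have "\<dots> = ip m ?Aw ?AE - ip m ?Az ?AE - ip m e ?AE"
        unfolding resd ip_diff_left ..
      finally show ?thesis unfolding u by (simp add: ip_commute)
    qed
    have c1: "card {j. j < n \<and> (E j \<noteq> 0 \<or> w' j \<noteq> 0)} \<le> 2*k+1"
    proof -
      have "card {j. j < n \<and> (E j \<noteq> 0 \<or> w' j \<noteq> 0)} \<le> card (insert i S)"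
        using Sfin w'S by (intro card_mono) (auto simp: E_def)
      also have "\<dots> \<le> k + 1" using Scard Sfin by (simp add: card_insert_if)
      finally show ?thesis by simp
    qed
    have c2: "card {j. j < n \<and> (E j \<noteq> 0 \<or> z j \<noteq> 0)} \<le> 2*k+1"
    proof -
      have "card {j. j < n \<and> (E j \<noteq> 0 \<or> z j \<noteq> 0)} \<le> card (insert i Ss)"
        using Ssfin zS by (intro card_mono) (auto simp: E_def)
      also have "\<dots> \<le> k + 1" using Sscard Ssfin by (simp add: card_insert_if)
      finally show ?thesis by simp
    qed
    have Ew: "ip n E w' = 0" unfolding ip_def E_def w'_def using False by (intro sum.neutral) auto
    have Ez: "ip n E z = z i"
    proof -
      have "ip n E z = (\<Sum>j<n. if j = i then z j else 0)" unfolding ip_def E_def by (intro sum.cong) auto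
      then show ?thesis using i by simp
    qed
    have T1: "\<bar>ip m ?AE ?Aw\<bar> \<le> d1 * nw"
      using rip_ip[OF c1, of m A] Ew nE unfolding d1_def nw_def by simp
    have T2: "\<bar>ip m ?AE ?Az - z i\<bar> \<le> d1 * nz"
      using rip_ip[OF c2, of m A] Ez nE unfolding d1_def nz_def by simp
    have T3: "\<bar>ip m ?AE e\<bar> \<le> ne"
      using ip_CS[of m ?AE e] col i unfolding AE ne_def by simp
    have nzx: "nz \<le> norm2 n xs"
      unfolding nz_def norm2_def z_def
      by (intro real_sqrt_le_mono sum_mono) auto
    have "\<bar>oracle_u \<eta> xs S i / \<eta> - tmat_vec m A res i\<bar> \<le> d1 * nw + d1 * nz + ne"
      unfolding val using T1 T2 T3 by linarith
    also have "\<dots> \<le> d1 * ((d2 * nz + sqrt (1 + dk) * ne) / (1 - dk)) + d1 * nz + ne"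
      using mult_left_mono[OF nwb d10] by linarith
    also have "\<dots> = alpha_rip m n A k * nz + gamma_rip m n A k * ne"
    proof -
      have gen: "d1 * ((d2 * nz + s * ne) / q) + d1 * nz + ne = d1 * (1 + d2 / q) * nz + (1 + d1 * s / q) * ne"
        if "q \<noteq> 0" for q s :: real using that by (simp add: field_simps)
      show ?thesis unfolding alpha gamma using gen[of "1 - dk" "sqrt (1 + dk)"] dkl by simp
    qed
    also have "\<dots> \<le> alpha_rip m n A k * norm2 n xs + gamma_rip m n A k * ne"
      using nzx alpha0 by (simp add: mult_left_mono)
    finally show ?thesis unfolding ne_def .
  qed
qed



lemma Max_scale:
  fixes f :: "nat \<Rightarrow> real"
  assumes "finite A" "A \<noteq> {}" "c \<ge> 0"
  shows "Max ((\<lambda>i. c * f i) ` A) = c * Max (f ` A)"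
proof -
  have m: "mono (\<lambda>v::real. c * v)" using assms(3) by (intro monoI mult_left_mono)
  have "c * Max (f ` A) = Max ((\<lambda>v. c * v) ` (f ` A))"
    using mono_Max_commute[OF m] assms(1,2) by simp
  then show ?thesis by (simp add: image_image)
qed

theorem lemmaC11:
  fixes m n k :: nat and A :: "nat \<Rightarrow> nat \<Rightarrow> real" and xs e y X0 :: "nat \<Rightarrow> real"
    and \<eta> :: real and t :: nat
  assumes "m > 0" "n > 0" "k > 0" "2*k+1 \<le> n"
    and "rip_const m n A (2*k+1) < 1"
    and "\<forall>j<n. norm2 m (\<lambda>i. A i j) = 1"
    and "\<forall>i\<ge>n. xs i = 0"
    and "card {i. xs i \<noteq> 0} \<le> k"
    and "y = (\<lambda>i. mat_vec n A xs i + e i)"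
    and "\<eta> > 0"
  shows "let X = sea_X m n A k y X0 \<eta> t; St = sea_S n k X; x = sea_x m n A k y X;
             g = tmat_vec m A (\<lambda>i. mat_vec n A x i - y i);
             u = oracle_u \<eta> xs St;
             b = (\<lambda>i. u i - \<eta> * g i)
         in norm_inf n (\<lambda>i. u i / \<eta> - g i) = (1 / \<eta>) * norm_inf n b \<and>
            (1 / \<eta>) * norm_inf n b \<le> alpha_rip m n A k * norm2 n xs + gamma_rip m n A k * norm2 m e"
proof -
  define X where "X = sea_X m n A k y X0 \<eta> t"
  define St where "St = sea_S n k X"
  define x where "x = sea_x m n A k y X"
  define g where "g = tmat_vec m A (\<lambda>i. mat_vec n A x i - y i)"
  define u where "u = oracle_u \<eta> xs St"
  define b where "b = (\<lambda>i. u i - \<eta> * g i)"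
  define B where "B = alpha_rip m n A k * norm2 n xs + gamma_rip m n A k * norm2 m e"
  have St: "St = largest n k X" unfolding St_def sea_S_def ..
  have xx: "x = ls_on m A (largest n k X) y" unfolding x_def sea_x_def sea_S_def ..
  have H: "\<bar>u i / \<eta> - g i\<bar> \<le> B" if "i < n" for i
    unfolding u_def g_def St xx B_def
    by (rule core[OF assms(3,5,6,7,8,9,10) that])
  have eta: "\<eta> > 0" by fact
  have bi: "(\<lambda>i. \<bar>b i\<bar>) = (\<lambda>i. \<eta> * \<bar>u i / \<eta> - g i\<bar>)"
  proof
    fix i
    have "b i = \<eta> * (u i / \<eta> - g i)" unfolding b_def using eta by (simp add: field_simps)
    then show "\<bar>b i\<bar> = \<eta> * \<bar>u i / \<eta> - g i\<bar>" using eta by (simp add: abs_mult)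
  qed
  have ne: "{..<n} \<noteq> {}" using assms(2) by auto
  have e1: "norm_inf n b = \<eta> * norm_inf n (\<lambda>i. u i / \<eta> - g i)"
    unfolding norm_inf_def bi using Max_scale[OF _ ne, of \<eta> "\<lambda>i. \<bar>u i / \<eta> - g i\<bar>"] eta by simp
  have c1: "norm_inf n (\<lambda>i. u i / \<eta> - g i) = (1 / \<eta>) * norm_inf n b"
    unfolding e1 using eta by simp
  have c2: "norm_inf n (\<lambda>i. u i / \<eta> - g i) \<le> B"
    unfolding norm_inf_def using H ne by (simp add: Max_le_iff)
  have "norm_inf n (\<lambda>i. u i / \<eta> - g i) = (1 / \<eta>) * norm_inf n b \<and> (1 / \<eta>) * norm_inf n b \<le> B"
    using c1 c2 by simp
  then show ?thesis
    unfolding Let_def B_def b_def u_def g_def x_def St_def X_def .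
qed

end
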